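(* Let $\mathcal{C}=(\mathcal{L},\mathcal{P})$ be a combinatorial line arrangement with ordered lines $\mathcal{L}=\{\ell_0,\ldots,\ell_n\}$, and let $\Gamma(\mathcal{C})$ be its incidence graph. Then there is a one-to-one correspondence between the elements of $\mathbf{nbc}(\mathcal{C})$ and a set of independent cycles of $\Gamma(\mathcal{C})$ forming a basis of its cycle space; in particular the first Betti number $b_1(\Gamma(\mathcal{C}))$ equals $|\mathbf{nbc}(\mathcal{C})|$.
   Context: A combinatorial line arrangement is a pair $\mathcal{C}=(\mathcal{L},\mathcal{P})$ with $\mathcal{L}$ a finite set ("lines") and $\mathcal{P}\subset 2^{\mathcal{L}}$ ("intersection points") such that every $P\in\mathcal{P}$ has $|P|\ge2$ and any two distinct lines lie in a unique common $P\in\mathcal{P}$. Lines are ordered $\ell_0,\ldots,\ell_n$ and points are identified with index sets $I\subset\{0,\ldots,n\}$. The incidence graph $\Gamma(\mathcal{C})$ is the bipartite graph with vertex set $\mathcal{L}\cup\mathcal{P}$ and edges $(\ell,P)$ for $\ell\in P$. A pair $(j,k)$ with $1\le j<k\le n$ is an nbc if there is a point $P_I$ with $j,k\in I$ and $j=\min I$; $\mathbf{nbc}(\mathcal{C})$ is the set of these pairs. *)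

theory Defs
  imports Main
begin

text \<open>Lines are the indices 0..n (line l_i is identified with i); points are index sets.\<close>

definition comb_line_arr :: "nat \<Rightarrow> nat set set \<Rightarrow> bool" where
  "comb_line_arr n Pts \<longleftrightarrow>
     (\<forall>P\<in>Pts. P \<subseteq> {0..n} \<and> card P \<ge> 2) \<and>
     (\<forall>i\<le>n. \<forall>j\<le>n. i \<noteq> j \<longrightarrow> (\<exists>!P. P \<in> Pts \<and> i \<in> P \<and> j \<in> P))"

definition nbc :: "nat \<Rightarrow> nat set set \<Rightarrow> (nat \<times> nat) set" where
  "nbc n Pts = {(j, k). 1 \<le> j \<and> j < k \<and> k \<le> n \<and>
      (\<exists>P\<in>Pts. j \<in> P \<and> k \<in> P \<and> j = Min P)}"

type_synonym vert = "nat + nat set"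

definition inc_vertices :: "nat \<Rightarrow> nat set set \<Rightarrow> vert set" where
  "inc_vertices n Pts = Inl ` {0..n} \<union> Inr ` Pts"

definition inc_edges :: "nat \<Rightarrow> nat set set \<Rightarrow> vert set set" where
  "inc_edges n Pts = {{Inl i, Inr P} | i P. i \<le> n \<and> P \<in> Pts \<and> i \<in> P}"

definition edeg :: "'v set set \<Rightarrow> 'v \<Rightarrow> nat" where
  "edeg F v = card {e \<in> F. v \<in> e}"

definition cycle_space :: "'v set \<Rightarrow> 'v set set \<Rightarrow> 'v set set set" where
  "cycle_space V E = {F. F \<subseteq> E \<and> (\<forall>v\<in>V. even (edeg F v))}"

definition is_cycle :: "'v set \<Rightarrow> 'v set set \<Rightarrow> 'v set set \<Rightarrow> bool" where
  "is_cycle V E C \<longleftrightarrow> (\<exists>vs. length vs \<ge> 3 \<and> distinct vs \<and> set vs \<subseteq> V \<and>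
      C = {{vs ! i, vs ! ((i + 1) mod length vs)} | i. i < length vs} \<and> C \<subseteq> E)"

text \<open>GF(2)-sum (iterated symmetric difference) of a finite family of edge sets.\<close>
definition gf2_sum :: "'v set set set \<Rightarrow> 'v set set" where
  "gf2_sum S = {e. odd (card {C \<in> S. e \<in> C})}"

definition gf2_independent :: "'v set set set \<Rightarrow> bool" where
  "gf2_independent B \<longleftrightarrow> (\<forall>S. S \<subseteq> B \<and> finite S \<and> S \<noteq> {} \<longrightarrow> gf2_sum S \<noteq> {})"

definition gf2_spans :: "'v set set set \<Rightarrow> 'v set set set \<Rightarrow> bool" where
  "gf2_spans B W \<longleftrightarrow> (\<forall>F\<in>W. \<exists>S. S \<subseteq> B \<and> finite S \<and> F = gf2_sum S)"

definition is_cycle_basis :: "'v set \<Rightarrow> 'v set set \<Rightarrow> 'v set set set \<Rightarrow> bool" where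
  "is_cycle_basis V E B \<longleftrightarrow> (\<forall>C\<in>B. is_cycle V E C) \<and> gf2_independent B \<and>
      gf2_spans B (cycle_space V E)"

definition graph_adj :: "'v set set \<Rightarrow> ('v \<times> 'v) set" where
  "graph_adj E = {(u, v). {u, v} \<in> E}"

definition num_components :: "'v set \<Rightarrow> 'v set set \<Rightarrow> nat" where
  "num_components V E = card (V // ((graph_adj E)\<^sup>*))"

definition betti1 :: "'v set \<Rightarrow> 'v set set \<Rightarrow> int" where
  "betti1 V E = int (card E) - int (card V) + int (num_components V E)"

end

theory Submission imports Defs begin

lemma even_sum_card:
  fixes g :: "'a \<Rightarrow> nat"
  assumes "finite A"
  shows "even (\<Sum>x\<in>A. g x) \<longleftrightarrow> even (card {x\<in>A. odd (g x)})"
  using assms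
proof (induction A rule: finite_induct)
  case empty then show ?case by simp
next
  case (insert x A)
  have e: "{y \<in> insert x A. odd (g y)} = (if odd (g x) then insert x {y\<in>A. odd (g y)} else {y\<in>A. odd (g y)})"
    by auto
  have "finite {y\<in>A. odd (g y)}" using insert by simp
  moreover have "x \<notin> {y\<in>A. odd (g y)}" using insert by simp
  ultimately show ?case using insert e by auto
qed

lemma gf2_sum_even:
  assumes "finite S" "\<forall>C\<in>S. finite C" "\<forall>C\<in>S. even (edeg C v)"
  shows "even (edeg (gf2_sum S) v)"
proof -
  define U where "U = {e \<in> \<Union>S. v \<in> e}"
  have fU: "finite U" using assms unfolding U_def by auto
  have c: "edeg C v = (\<Sum>e\<in>U. if e \<in> C then 1 else 0)" if "C \<in> S" for C
  proof -
    have "{e \<in> C. v \<in> e} = {e\<in>U. e \<in> C}" using that unfolding U_def by auto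
    then show ?thesis unfolding edeg_def using fU by (simp add: sum.If_cases Int_def)
  qed
  have "(\<Sum>C\<in>S. edeg C v) = (\<Sum>C\<in>S. \<Sum>e\<in>U. if e \<in> C then 1 else 0)"
    using c by simp
  also have "\<dots> = (\<Sum>e\<in>U. \<Sum>C\<in>S. if e \<in> C then 1 else 0)" by (rule sum.swap)
  also have "\<dots> = (\<Sum>e\<in>U. card {C\<in>S. e \<in> C})"
    using assms(1) by (simp add: sum.If_cases Int_def)
  finally have eq: "(\<Sum>C\<in>S. edeg C v) = (\<Sum>e\<in>U. card {C\<in>S. e \<in> C})" .
  have "even (\<Sum>C\<in>S. edeg C v)" using assms(3) by (simp add: dvd_sum)
  then have "even (card {e\<in>U. odd (card {C\<in>S. e \<in> C})})"
    using eq even_sum_card[OF fU] by simp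
  moreover have "{e\<in>U. odd (card {C\<in>S. e \<in> C})} = {e \<in> gf2_sum S. v \<in> e}"
  proof -
    have "odd (card {C\<in>S. e \<in> C}) \<Longrightarrow> e \<in> \<Union>S" for e
      by (metis (no_types, lifting) UnionI card.empty empty_Collect_eq even_zero)
    then show ?thesis unfolding U_def gf2_sum_def by auto
  qed
  ultimately show ?thesis unfolding edeg_def by simp
qed

lemma edeg_symdiff:
  assumes "finite F" "finite G"
  shows "even (edeg ((F - G) \<union> (G - F)) v) \<longleftrightarrow> even (edeg F v + edeg G v)"
proof -
  define A where "A = {e\<in>F. v \<in> e}"
  define B where "B = {e\<in>G. v \<in> e}"
  have fA: "finite A" "finite B" using assms unfolding A_def B_def by auto
  have "{e \<in> (F - G) \<union> (G - F). v \<in> e} = (A - B) \<union> (B - A)" unfolding A_def B_def by auto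
  moreover have "card ((A - B) \<union> (B - A)) = card (A - B) + card (B - A)"
    by (rule card_Un_disjoint) (use fA in auto)
  moreover have "card (A - B) + card (A \<inter> B) = card A"
    using fA card_Int_Diff[of A B] by simp
  moreover have "card (B - A) + card (A \<inter> B) = card B"
    using fA card_Int_Diff[of B A] by (simp add: Int_commute)
  ultimately show ?thesis unfolding edeg_def A_def[symmetric] B_def[symmetric] by presburger
qed

lemma filt_ins: "{x \<in> insert y A. P x} = (if P y then insert y {x\<in>A. P x} else {x\<in>A. P x})"
  by auto
lemma filt_empty: "{x \<in> {}. P x} = {}" by auto

lemma edeg6a:
  assumes "distinct [a,b,c,d,e,f]"
  shows "card {x \<in> {{a,b},{b,c},{c,d},{d,e},{e,f},{f,a}}. a \<in> x} = 2"
  unfolding filt_ins filt_empty using assms by (simp add: doubleton_eq_iff)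

lemma edeg6z:
  assumes "v \<notin> {a,b,c,d,e,f}"
  shows "card {x \<in> {{a,b},{b,c},{c,d},{d,e},{e,f},{f,a}}. v \<in> x} = 0"
  unfolding filt_ins filt_empty using assms by simp

lemma rot6: "{{a,b},{b,c},{c,d},{d,e},{e,f},{f,a}} = {{b,c},{c,d},{d,e},{e,f},{f,a},{a,b}}"
  by auto

lemma edeg6:
  assumes "distinct [a,b,c,d,e,f]"
  shows "even (edeg {{a,b},{b,c},{c,d},{d,e},{e,f},{f,a}} v)"
proof -
  have d2: "distinct [b,c,d,e,f,a]" "distinct [c,d,e,f,a,b]" "distinct [d,e,f,a,b,c]"
    "distinct [e,f,a,b,c,d]" "distinct [f,a,b,c,d,e]" using assms by auto
  note r1 = rot6[of a b c d e f] and r2 = rot6[of b c d e f a] and r3 = rot6[of c d e f a b]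
   and r4 = rot6[of d e f a b c] and r5 = rot6[of e f a b c d]
  consider "v = a" | "v = b" | "v = c" | "v = d" | "v = e" | "v = f" | "v \<notin> {a,b,c,d,e,f}" by auto
  then show ?thesis
  proof cases
    case 1 then show ?thesis using edeg6a[OF assms] unfolding edeg_def by simp
  next
    case 2 then show ?thesis using edeg6a[OF d2(1)] unfolding edeg_def r1 by simp
  next
    case 3 then show ?thesis using edeg6a[OF d2(2)] unfolding edeg_def r1 r2 by simp
  next
    case 4 then show ?thesis using edeg6a[OF d2(3)] unfolding edeg_def r1 r2 r3 by simp
  next
    case 5 then show ?thesis using edeg6a[OF d2(4)] unfolding edeg_def r1 r2 r3 r4 by simp
  next
    case 6 then show ?thesis using edeg6a[OF d2(5)] unfolding edeg_def r1 r2 r3 r4 r5 by simp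
  next
    case 7 then show ?thesis unfolding edeg_def edeg6z[OF 7] by simp
  qed
qed
lemma is_cycle6:
  assumes "distinct [a,b,c,d,e,f]" "{a,b,c,d,e,f} \<subseteq> V"
    "{{a,b},{b,c},{c,d},{d,e},{e,f},{f,a}} \<subseteq> E"
  shows "is_cycle V E {{a,b},{b,c},{c,d},{d,e},{e,f},{f,a}}"
  unfolding is_cycle_def
proof (intro exI conjI)
  let ?vs = "[a,b,c,d,e,f]"
  have l: "length ?vs = 6" by simp
  have "{{?vs ! i, ?vs ! ((i + 1) mod length ?vs)} | i. i < length ?vs}
     = (\<lambda>i. {?vs ! i, ?vs ! ((i + 1) mod 6)}) ` {..<6}"
    unfolding l by (simp only: Setcompr_eq_image[symmetric]) blast
  also have "{..<6::nat} = {0,1,2,3,4,5}" by auto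
  also have "(\<lambda>i. {?vs ! i, ?vs ! ((i + 1) mod 6)}) ` {0,1,2,3,4,5} = {{a,b},{b,c},{c,d},{d,e},{e,f},{f,a}}" 
    by simp
  finally show "{{a,b},{b,c},{c,d},{d,e},{e,f},{f,a}} = {{?vs ! i, ?vs ! ((i + 1) mod length ?vs)} | i. i < length ?vs}" by simp
qed (use assms in auto)

locale cla =
  fixes n :: nat and Pts :: "nat set set"
  assumes arr: "comb_line_arr n Pts"
begin

lemma Pts_sub: "P \<in> Pts \<Longrightarrow> P \<subseteq> {0..n}"
  using arr unfolding comb_line_arr_def by blast

lemma Pts_card: "P \<in> Pts \<Longrightarrow> card P \<ge> 2"
  using arr unfolding comb_line_arr_def by blast

lemma Pts_fin: "P \<in> Pts \<Longrightarrow> finite P"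
  using Pts_card by (metis card.infinite not_numeral_le_zero)

lemma Pts_ne: "P \<in> Pts \<Longrightarrow> P \<noteq> {}"
  using Pts_card by fastforce

lemma fin_Pts: "finite Pts"
proof -
  have "Pts \<subseteq> Pow {0..n}" using Pts_sub by blast
  then show ?thesis by (meson finite_Pow_iff finite_atLeastAtMost finite_subset)
qed

lemma ex1: "i \<le> n \<Longrightarrow> j \<le> n \<Longrightarrow> i \<noteq> j \<Longrightarrow> \<exists>!P. P \<in> Pts \<and> i \<in> P \<and> j \<in> P"
  using arr unfolding comb_line_arr_def by blast

definition pt :: "nat \<Rightarrow> nat \<Rightarrow> nat set" where
  "pt i j = (THE P. P \<in> Pts \<and> i \<in> P \<and> j \<in> P)"

lemma pt: assumes "i \<le> n" "j \<le> n" "i \<noteq> j"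
  shows "pt i j \<in> Pts" "i \<in> pt i j" "j \<in> pt i j"
  using theI'[OF ex1[OF assms]] unfolding pt_def by auto

lemma pt_uniq: assumes "P \<in> Pts" "i \<in> P" "j \<in> P" "i \<noteq> j"
  shows "P = pt i j"
proof -
  have "i \<le> n" using Pts_sub[OF assms(1)] assms by auto
  moreover have "j \<le> n" using Pts_sub[OF assms(1)] assms by auto
  ultimately show ?thesis using ex1[of i j] pt[of i j] assms by metis
qed

lemma same_pt: assumes "P \<in> Pts" "Q \<in> Pts" "i \<in> P" "j \<in> P" "i \<in> Q" "j \<in> Q" "i \<noteq> j"
  shows "P = Q"
  using pt_uniq assms by metis

lemma in_Pts_le: "P \<in> Pts \<Longrightarrow> i \<in> P \<Longrightarrow> i \<le> n"
  by (meson Pts_sub atLeastAtMost_iff subsetD)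

abbreviation "V \<equiv> inc_vertices n Pts"
abbreviation "E \<equiv> inc_edges n Pts"

lemma E_iff: "e \<in> E \<longleftrightarrow> (\<exists>i P. e = {Inl i, Inr P} \<and> P \<in> Pts \<and> i \<in> P)"
proof
  assume "e \<in> E" then show "\<exists>i P. e = {Inl i, Inr P} \<and> P \<in> Pts \<and> i \<in> P"
    unfolding inc_edges_def by blast
next
  assume "\<exists>i P. e = {Inl i, Inr P} \<and> P \<in> Pts \<and> i \<in> P"
  then obtain i P where "e = {Inl i, Inr P}" "P \<in> Pts" "i \<in> P" by blast
  moreover have "i \<le> n" using in_Pts_le calculation by blast
  ultimately show "e \<in> E" unfolding inc_edges_def by blast
qed

lemma E_I: "P \<in> Pts \<Longrightarrow> i \<in> P \<Longrightarrow> {Inl i, Inr P} \<in> E"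
  unfolding E_iff by blast

lemma E_I2: "P \<in> Pts \<Longrightarrow> i \<in> P \<Longrightarrow> {Inr P, Inl i} \<in> E"
  using E_I by (simp add: insert_commute)

lemma fin_E: "finite E"
proof -
  have "E \<subseteq> (\<lambda>(i,P). {Inl i, Inr P}) ` ({0..n} \<times> Pts)"
  proof
    fix e assume "e \<in> E"
    then obtain i P where "e = {Inl i, Inr P}" "P \<in> Pts" "i \<in> P" unfolding E_iff by blast
    moreover have "i \<le> n" using in_Pts_le calculation by blast
    ultimately show "e \<in> (\<lambda>(i,P). {Inl i, Inr P}) ` ({0..n} \<times> Pts)" by force
  qed
  moreover have "finite ((\<lambda>(i,P). {Inl i, Inr P}) ` ({0..n} \<times> Pts))" using fin_Pts by simp
  ultimately show ?thesis using finite_subset by blast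
qed

lemma V_Inl: "i \<le> n \<Longrightarrow> Inl i \<in> V" unfolding inc_vertices_def by auto
lemma V_Inr: "P \<in> Pts \<Longrightarrow> Inr P \<in> V" unfolding inc_vertices_def by auto

definition cyc :: "nat \<Rightarrow> nat \<Rightarrow> vert set set" where
  "cyc j k = {{Inl 0, Inr (pt 0 j)}, {Inr (pt 0 j), Inl j}, {Inl j, Inr (pt j k)},
              {Inr (pt j k), Inl k}, {Inl k, Inr (pt 0 k)}, {Inr (pt 0 k), Inl 0}}"

lemma nbcD: assumes "(j,k) \<in> nbc n Pts"
  shows "1 \<le> j" "j < k" "k \<le> n" "pt j k \<in> Pts" "j \<in> pt j k" "k \<in> pt j k"
    "Min (pt j k) = j" "0 \<notin> pt j k"
proof -
  obtain P where P: "P \<in> Pts" "j \<in> P" "k \<in> P" "Min P = j" and jk: "1 \<le> j" "j < k" "k \<le> n"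
    using assms unfolding nbc_def by auto
  have PP: "pt j k = P" using pt_uniq[OF P(1-3)] jk by simp
  show "1 \<le> j" "j < k" "k \<le> n" using jk by auto
  show "pt j k \<in> Pts" "j \<in> pt j k" "k \<in> pt j k" "Min (pt j k) = j" unfolding PP using P by auto
  show "0 \<notin> pt j k"
  proof
    assume "0 \<in> pt j k"
    then have "Min P \<le> 0" unfolding PP using Pts_fin[OF P(1)] Min_le by blast
    then show False using P jk by simp
  qed
qed

lemma nbc_dist: assumes "(j,k) \<in> nbc n Pts"
  shows "distinct [Inl 0, Inr (pt 0 j), Inl j, Inr (pt j k), Inl k, Inr (pt 0 k)]"
proof -
  note d = nbcD[OF assms]
  have p0j: "pt 0 j \<in> Pts" "0 \<in> pt 0 j" "j \<in> pt 0 j" using pt[of 0 j] d by auto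
  have p0k: "pt 0 k \<in> Pts" "0 \<in> pt 0 k" "k \<in> pt 0 k" using pt[of 0 k] d by auto
  have "pt 0 j \<noteq> pt j k" using p0j d by auto
  moreover have "pt 0 k \<noteq> pt j k" using p0k d by auto
  moreover have "pt 0 j \<noteq> pt 0 k"
  proof
    assume "pt 0 j = pt 0 k"
    then have "pt 0 j = pt j k" using same_pt[of "pt 0 j" "pt j k" j k] p0j p0k d by auto
    then show False using p0j d by auto
  qed
  ultimately show ?thesis using d by auto
qed

lemma cyc_is_cycle: assumes "(j,k) \<in> nbc n Pts" shows "is_cycle V E (cyc j k)"
proof -
  note d = nbcD[OF assms]
  have p0j: "pt 0 j \<in> Pts" "0 \<in> pt 0 j" "j \<in> pt 0 j" using pt[of 0 j] d by auto
  have p0k: "pt 0 k \<in> Pts" "0 \<in> pt 0 k" "k \<in> pt 0 k" using pt[of 0 k] d by auto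
  show ?thesis unfolding cyc_def
    by (rule is_cycle6[OF nbc_dist[OF assms]])
      (use d p0j p0k in \<open>auto intro: E_I E_I2 V_Inl V_Inr\<close>)
qed

lemma cyc_even: assumes "(j,k) \<in> nbc n Pts" shows "even (edeg (cyc j k) v)"
  unfolding cyc_def by (rule edeg6[OF nbc_dist[OF assms]])

lemma cyc_fin: "finite (cyc j k)" unfolding cyc_def by simp

lemma cyc_sub: assumes "(j,k) \<in> nbc n Pts" shows "cyc j k \<subseteq> E"
proof -
  note d = nbcD[OF assms]
  have p0j: "pt 0 j \<in> Pts" "0 \<in> pt 0 j" "j \<in> pt 0 j" using pt[of 0 j] d by auto
  have p0k: "pt 0 k \<in> Pts" "0 \<in> pt 0 k" "k \<in> pt 0 k" using pt[of 0 k] d by auto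
  show ?thesis unfolding cyc_def using d p0j p0k by (auto intro: E_I E_I2)
qed

lemma key_in: "{Inl k, Inr (pt j k)} \<in> cyc j k"
  unfolding cyc_def by (simp add: insert_commute)

lemma key_uniq:
  assumes "(j,k) \<in> nbc n Pts" "(j',k') \<in> nbc n Pts" "{Inl k, Inr (pt j k)} \<in> cyc j' k'"
  shows "j' = j \<and> k' = k"
proof -
  note d = nbcD[OF assms(1)] and d' = nbcD[OF assms(2)]
  have p0j: "0 \<in> pt 0 j'" using pt[of 0 j'] d' by auto
  have p0k: "0 \<in> pt 0 k'" using pt[of 0 k'] d' by auto
  from assms(3) have
    "k = 0 \<or> pt j k = pt 0 j' \<or> (k = j' \<and> pt j k = pt j' k') \<or> (k = k' \<and> pt j k = pt j' k')
     \<or> pt j k = pt 0 k'"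
    unfolding cyc_def by (auto simp: doubleton_eq_iff)
  then show ?thesis
  proof (elim disjE)
    assume "k = j' \<and> pt j k = pt j' k'"
    then have "j = j'" using d d' by metis
    then show ?thesis using \<open>k = j' \<and> pt j k = pt j' k'\<close> d by simp
  next
    assume "k = k' \<and> pt j k = pt j' k'"
    then have "j = j'" using d d' by metis
    then show ?thesis using \<open>k = k' \<and> pt j k = pt j' k'\<close> by simp
  qed (use d p0j p0k in auto)
qed

end
context cla begin

abbreviation "B \<equiv> (\<lambda>(j,k). cyc j k) ` nbc n Pts"

lemma fin_nbc: "finite (nbc n Pts)"
proof -
  have "nbc n Pts \<subseteq> {0..n} \<times> {0..n}" unfolding nbc_def by auto
  then show ?thesis using finite_subset by blast
qed

lemma inj_cyc: "inj_on (\<lambda>(j,k). cyc j k) (nbc n Pts)"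
proof (rule inj_onI)
  fix x y assume x: "x \<in> nbc n Pts" and y: "y \<in> nbc n Pts"
    and eq: "(\<lambda>(j,k). cyc j k) x = (\<lambda>(j,k). cyc j k) y"
  obtain j k where xj: "x = (j,k)" by (cases x)
  obtain j' k' where yj: "y = (j',k')" by (cases y)
  have "{Inl k, Inr (pt j k)} \<in> cyc j' k'" using key_in[of k j] eq xj yj by simp
  then show "x = y" using key_uniq x y xj yj by auto
qed

lemma B_indep: "gf2_independent B"
  unfolding gf2_independent_def
proof (intro allI impI)
  fix S assume S: "S \<subseteq> B \<and> finite S \<and> S \<noteq> {}"
  then obtain C where "C \<in> S" by blast
  then have "C \<in> B" using S by blast
  then obtain j k where jk: "(j,k) \<in> nbc n Pts" and C: "C = cyc j k" by auto
  let ?e = "{Inl k, Inr (pt j k)}"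
  have "{C' \<in> S. ?e \<in> C'} = {C}"
  proof
    show "{C} \<subseteq> {C' \<in> S. ?e \<in> C'}" using \<open>C \<in> S\<close> C key_in by simp
    show "{C' \<in> S. ?e \<in> C'} \<subseteq> {C}"
    proof
      fix C' assume "C' \<in> {C' \<in> S. ?e \<in> C'}"
      then have "C' \<in> S" "?e \<in> C'" by auto
      then have "C' \<in> B" using S by blast
      then obtain j' k' where jk': "(j',k') \<in> nbc n Pts" and C': "C' = cyc j' k'" by auto
      then have "j' = j \<and> k' = k" using key_uniq[OF jk jk'] \<open>?e \<in> C'\<close> by simp
      then show "C' \<in> {C}" using C C' by simp
    qed
  qed
  then have "?e \<in> gf2_sum S" unfolding gf2_sum_def by simp
  then show "gf2_sum S \<noteq> {}" by blast
qed

lemma gf2_sum_sub: "gf2_sum S \<subseteq> \<Union>S"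
proof
  fix e assume "e \<in> gf2_sum S"
  then have "odd (card {C\<in>S. e \<in> C})" unfolding gf2_sum_def by simp
  then have "{C\<in>S. e \<in> C} \<noteq> {}" by (metis card.empty even_zero)
  then show "e \<in> \<Union>S" by blast
qed

lemma special:
  assumes "e \<in> E" "\<And>j k. (j,k) \<in> nbc n Pts \<Longrightarrow> e \<noteq> {Inl k, Inr (pt j k)}"
  shows "\<exists>i P. e = {Inl i, Inr P} \<and> P \<in> Pts \<and> i \<in> P \<and> (0 \<notin> P \<longrightarrow> i = Min P)"
proof -
  obtain i P where e: "e = {Inl i, Inr P}" "P \<in> Pts" "i \<in> P" using assms(1) E_iff by blast
  have "i = Min P" if "0 \<notin> P"
  proof (rule ccontr)
    assume ne: "i \<noteq> Min P"
    have fP: "finite P" using Pts_fin e by auto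
    have mP: "Min P \<in> P" using Min_in[OF fP Pts_ne[OF e(2)]] .
    have "Min P \<le> i" using Min_le[OF fP e(3)] .
    then have lt: "Min P < i" using ne by simp
    have "Min P \<noteq> 0"
    proof
      assume "Min P = 0" then show False using mP that by simp
    qed
    then have "(Min P, i) \<in> nbc n Pts" unfolding nbc_def
      using lt e in_Pts_le mP by auto
    moreover have "pt (Min P) i = P" using pt_uniq[OF e(2) mP e(3)] lt by simp
    ultimately show False using assms(2)[of "Min P" i] e by simp
  qed
  then show ?thesis using e by blast
qed

lemma reduce_empty:
  assumes FE: "F' \<subseteq> E" and ev: "\<And>v. v \<in> V \<Longrightarrow> even (edeg F' v)"
    and sp: "\<And>j k. (j,k) \<in> nbc n Pts \<Longrightarrow> {Inl k, Inr (pt j k)} \<notin> F'"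
  shows "F' = {}"
proof -
  have shape: "\<exists>i P. e = {Inl i, Inr P} \<and> P \<in> Pts \<and> i \<in> P \<and> (0 \<notin> P \<longrightarrow> i = Min P)"
    if "e \<in> F'" for e
    using special[of e] that FE sp by blast
  have fF: "finite F'" using FE fin_E finite_subset by blast
  have A: "Inr P \<notin> e" if eF: "e \<in> F'" and PP: "P \<in> Pts" and P0: "0 \<notin> P" for e P
  proof
    assume "Inr P \<in> e"
    have "{x \<in> F'. Inr P \<in> x} = {{Inl (Min P), Inr P}}"
    proof (intro equalityI subsetI)
      fix x assume "x \<in> {x \<in> F'. Inr P \<in> x}"
      then have "x \<in> F'" "Inr P \<in> x" by auto
      then obtain i Q where "x = {Inl i, Inr Q}" "Q \<in> Pts" "i \<in> Q" "0 \<notin> Q \<longrightarrow> i = Min Q"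
        using shape by blast
      then show "x \<in> {{Inl (Min P), Inr P}}" using \<open>Inr P \<in> x\<close> P0 by auto
    next
      fix x assume "x \<in> {{Inl (Min P), Inr P}}"
      then have x: "x = {Inl (Min P), Inr P}" by simp
      obtain i Q where "e = {Inl i, Inr Q}" "Q \<in> Pts" "i \<in> Q" "0 \<notin> Q \<longrightarrow> i = Min Q"
        using shape eF by blast
      then have "e = x" using \<open>Inr P \<in> e\<close> P0 x by auto
      then show "x \<in> {x \<in> F'. Inr P \<in> x}" using eF \<open>Inr P \<in> e\<close> by simp
    qed
    then have "edeg F' (Inr P) = 1" unfolding edeg_def by simp
    then show False using ev[of "Inr P"] V_Inr[OF PP] by simp
  qed
  have Bx: "Inl i \<notin> e" if eF: "e \<in> F'" and i0: "i \<noteq> 0" for e i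
  proof
    assume "Inl i \<in> e"
    obtain i0 P where e: "e = {Inl i0, Inr P}" "P \<in> Pts" "i0 \<in> P" using shape eF by blast
    have "i0 = i" using e \<open>Inl i \<in> e\<close> by auto
    have "0 \<in> P" using A[OF eF e(2)] e by auto
    have "{x \<in> F'. Inl i \<in> x} = {e}"
    proof (intro equalityI subsetI)
      fix x assume "x \<in> {x \<in> F'. Inl i \<in> x}"
      then have x: "x \<in> F'" "Inl i \<in> x" by auto
      then obtain i' Q where xq: "x = {Inl i', Inr Q}" "Q \<in> Pts" "i' \<in> Q" using shape by blast
      have "i' = i" using xq x by auto
      have "0 \<in> Q" using A[OF x(1) xq(2)] xq by auto
      have "Q = P" using same_pt[OF xq(2) e(2), of 0 i] \<open>0 \<in> Q\<close> \<open>0 \<in> P\<close> xq(3) e(3) \<open>i' = i\<close> \<open>i0 = i\<close> i0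
        by auto
      then show "x \<in> {e}" using xq e \<open>i' = i\<close> \<open>i0 = i\<close> by simp
    next
      fix x assume "x \<in> {e}" then show "x \<in> {x \<in> F'. Inl i \<in> x}" using eF \<open>Inl i \<in> e\<close> by simp
    qed
    then have "edeg F' (Inl i) = 1" unfolding edeg_def by simp
    moreover have "i \<le> n" using in_Pts_le e \<open>i0 = i\<close> by blast
    ultimately show False using ev[of "Inl i"] V_Inl by fastforce
  qed
  show ?thesis
  proof (rule ccontr)
    assume "F' \<noteq> {}"
    then obtain e where eF: "e \<in> F'" by blast
    obtain i P where e: "e = {Inl i, Inr P}" "P \<in> Pts" "i \<in> P" using shape eF by blast
    have "i = 0" using Bx[OF eF, of i] e by (cases "i = 0") auto
    have "{x \<in> F'. Inr P \<in> x} = {e}"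
    proof (intro equalityI subsetI)
      fix x assume "x \<in> {x \<in> F'. Inr P \<in> x}"
      then have x: "x \<in> F'" "Inr P \<in> x" by auto
      then obtain i' Q where xq: "x = {Inl i', Inr Q}" "Q \<in> Pts" "i' \<in> Q" using shape by blast
      have "i' = 0" using Bx[OF x(1), of i'] xq by (cases "i' = 0") auto
      then show "x \<in> {e}" using xq x e \<open>i = 0\<close> by auto
    next
      fix x assume "x \<in> {e}" then show "x \<in> {x \<in> F'. Inr P \<in> x}" using eF e by simp
    qed
    then have "edeg F' (Inr P) = 1" unfolding edeg_def by simp
    then show False using ev[of "Inr P"] V_Inr[OF e(2)] by simp
  qed
qed

end
context cla begin

lemma B_spans: "gf2_spans B (cycle_space V E)"
  unfolding gf2_spans_def
proof
  fix F assume "F \<in> cycle_space V E"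
  then have FE: "F \<subseteq> E" and evF: "\<And>v. v \<in> V \<Longrightarrow> even (edeg F v)"
    unfolding cycle_space_def by auto
  define T where "T = {p \<in> nbc n Pts. {Inl (snd p), Inr (pt (fst p) (snd p))} \<in> F}"
  define S where "S = (\<lambda>(j,k). cyc j k) ` T"
  define G where "G = gf2_sum S"
  have TN: "T \<subseteq> nbc n Pts" unfolding T_def by auto
  have SB: "S \<subseteq> B" unfolding S_def using TN by auto
  have fS: "finite S" unfolding S_def using finite_subset[OF TN fin_nbc] by simp
  have Sel: "\<exists>j k. (j,k) \<in> T \<and> C = cyc j k" if "C \<in> S" for C
    using that unfolding S_def by auto
  have SE: "\<Union>S \<subseteq> E" using Sel cyc_sub TN by blast
  have GE: "G \<subseteq> E" unfolding G_def using gf2_sum_sub SE by blast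
  have fF: "finite F" using FE fin_E finite_subset by blast
  have fG: "finite G" using GE fin_E finite_subset by blast
  have evG: "even (edeg G v)" for v
    unfolding G_def
  proof (rule gf2_sum_even[OF fS])
    show "\<forall>C\<in>S. finite C" using Sel cyc_fin by blast
    show "\<forall>C\<in>S. even (edeg C v)" using Sel cyc_even TN by blast
  qed
  define F' where "F' = (F - G) \<union> (G - F)"
  have "F' = {}"
  proof (rule reduce_empty)
    show "F' \<subseteq> E" unfolding F'_def using FE GE by blast
    show "even (edeg F' v)" if "v \<in> V" for v
      unfolding F'_def using edeg_symdiff[OF fF fG, of v] evF[OF that] evG[of v] by simp
    show "{Inl k, Inr (pt j k)} \<notin> F'" if jk: "(j,k) \<in> nbc n Pts" for j k
    proof -
      let ?e = "{Inl k, Inr (pt j k)}"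
      have sub: "{C \<in> S. ?e \<in> C} \<subseteq> {cyc j k}"
      proof
        fix C assume "C \<in> {C \<in> S. ?e \<in> C}"
        then have "C \<in> S" "?e \<in> C" by auto
        then obtain j' k' where "(j',k') \<in> T" "C = cyc j' k'" using Sel by blast
        then have "j' = j \<and> k' = k" using key_uniq[OF jk, of j' k'] TN \<open>?e \<in> C\<close> by auto
        then show "C \<in> {cyc j k}" using \<open>C = cyc j' k'\<close> by simp
      qed
      show ?thesis
      proof (cases "?e \<in> F")
        case True
        then have "(j,k) \<in> T" unfolding T_def using jk by simp
        then have "cyc j k \<in> S" unfolding S_def by force
        then have "{C \<in> S. ?e \<in> C} = {cyc j k}" using sub key_in by blast
        then have "?e \<in> G" unfolding G_def gf2_sum_def by simp
        then show ?thesis using True unfolding F'_def by simp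
      next
        case False
        have "{C \<in> S. ?e \<in> C} = {}"
        proof (rule ccontr)
          assume "{C \<in> S. ?e \<in> C} \<noteq> {}"
          then have "cyc j k \<in> S" using sub by blast
          then obtain j' k' where "(j',k') \<in> T" "cyc j k = cyc j' k'" using Sel by blast
          moreover have "(j,k) \<in> nbc n Pts" "(j', k') \<in> nbc n Pts" using jk calculation TN by auto
          ultimately have "(j,k) = (j',k')" using inj_cyc unfolding inj_on_def by fastforce
          then show False using \<open>(j',k') \<in> T\<close> False unfolding T_def by simp
        qed
        then have "?e \<notin> G" unfolding G_def gf2_sum_def by (simp only: mem_Collect_eq card.empty) simp
        then show ?thesis using False unfolding F'_def by simp
      qed
    qed
  qed
  then have "F = G" unfolding F'_def by blast
  then show "\<exists>S. S \<subseteq> B \<and> finite S \<and> F = gf2_sum S" using SB fS G_def by blast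
qed

lemma basis: "is_cycle_basis V E B"
  unfolding is_cycle_basis_def using B_indep B_spans cyc_is_cycle by auto

end
context cla begin

lemma card_E: "card E = (\<Sum>P\<in>Pts. card P)"
proof -
  have eq: "E = (\<lambda>(P,i). {Inl i, Inr P}) ` (SIGMA P:Pts. P)"
  proof (intro equalityI subsetI)
    fix e assume "e \<in> E"
    then obtain i P where "e = {Inl i, Inr P}" "P \<in> Pts" "i \<in> P" unfolding E_iff by blast
    then show "e \<in> (\<lambda>(P,i). {Inl i, Inr P}) ` (SIGMA P:Pts. P)" by force
  next
    fix e assume "e \<in> (\<lambda>(P,i). {Inl i, Inr P}) ` (SIGMA P:Pts. P)"
    then obtain P i where "e = {Inl i, Inr P}" "P \<in> Pts" "i \<in> P" by auto
    then show "e \<in> E" using E_I by simp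
  qed
  have inj: "inj_on (\<lambda>(P,i). {Inl i, Inr P}) (SIGMA P:Pts. P)"
    by (rule inj_onI) (auto simp: doubleton_eq_iff)
  have "card E = card (SIGMA P:Pts. P)" unfolding eq using card_image[OF inj] .
  also have "\<dots> = (\<Sum>P\<in>Pts. card P)"
  proof -
    have "\<forall>a\<in>Pts. finite a" using Pts_fin by blast
    then show ?thesis using card_SigmaI[OF fin_Pts, of "\<lambda>P. P"] by simp
  qed
  finally show ?thesis .
qed

lemma card_V: "card V = Suc n + card Pts"
proof -
  have "card V = card (Inl ` {0..n} :: vert set) + card (Inr ` Pts :: vert set)"
    unfolding inc_vertices_def by (rule card_Un_disjoint) (use fin_Pts in auto)
  also have "\<dots> = Suc n + card Pts" by (simp add: card_image)
  finally show ?thesis .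
qed

lemma adj: "{u, v} \<in> E \<Longrightarrow> (u, v) \<in> graph_adj E \<and> (v, u) \<in> graph_adj E"
  unfolding graph_adj_def by (simp add: insert_commute)

lemma reach: assumes "x \<in> V"
  shows "(Inl 0, x) \<in> (graph_adj E)\<^sup>* \<and> (x, Inl 0) \<in> (graph_adj E)\<^sup>*"
proof -
  have line: "(Inl 0, Inl i) \<in> (graph_adj E)\<^sup>* \<and> (Inl i, Inl 0) \<in> (graph_adj E)\<^sup>*" if "i \<le> n" for i
  proof (cases "i = 0")
    case True then show ?thesis by simp
  next
    case False
    let ?Q = "pt 0 i"
    have Q: "?Q \<in> Pts" "0 \<in> ?Q" "i \<in> ?Q" using pt[of 0 i] that False by auto
    have a1: "(Inl 0, Inr ?Q) \<in> graph_adj E \<and> (Inr ?Q, Inl 0) \<in> graph_adj E"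
      using adj E_I[OF Q(1) Q(2)] by blast
    have a2: "(Inl i, Inr ?Q) \<in> graph_adj E \<and> (Inr ?Q, Inl i) \<in> graph_adj E"
      using adj E_I[OF Q(1) Q(3)] by blast
    show ?thesis using a1 a2
      by (meson converse_rtrancl_into_rtrancl r_into_rtrancl)
  qed
  show ?thesis
  proof (cases x)
    case (Inl i)
    then have "i \<le> n" using assms unfolding inc_vertices_def by auto
    then show ?thesis using line Inl by simp
  next
    case (Inr P)
    then have P: "P \<in> Pts" using assms unfolding inc_vertices_def by auto
    then obtain i where i: "i \<in> P" using Pts_ne by blast
    have "i \<le> n" using in_Pts_le P i by blast
    have a: "(Inl i, Inr P) \<in> graph_adj E \<and> (Inr P, Inl i) \<in> graph_adj E"
      using adj E_I[OF P i] by blast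
    show ?thesis using line[OF \<open>i \<le> n\<close>] a Inr
      by (meson converse_rtrancl_into_rtrancl rtrancl_into_rtrancl)
  qed
qed

lemma closed: assumes "(x, y) \<in> (graph_adj E)\<^sup>*" "x \<in> V" shows "y \<in> V"
  using assms
proof (induction rule: rtrancl_induct)
  case base then show ?case by simp
next
  case (step y z)
  then have "{y, z} \<in> E" unfolding graph_adj_def by simp
  then obtain i P where "{y, z} = {Inl i, Inr P}" "P \<in> Pts" "i \<in> P" unfolding E_iff by blast
  moreover have "i \<le> n" using in_Pts_le calculation by blast
  ultimately show ?case unfolding inc_vertices_def by (auto simp: doubleton_eq_iff)
qed

lemma ncomp: "num_components V E = 1"
proof -
  have cls: "(graph_adj E)\<^sup>* `` {x} = V" if "x \<in> V" for x
  proof (intro equalityI subsetI)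
    fix y assume "y \<in> (graph_adj E)\<^sup>* `` {x}"
    then show "y \<in> V" using closed that by blast
  next
    fix y assume "y \<in> V"
    then show "y \<in> (graph_adj E)\<^sup>* `` {x}" using reach[OF that] reach[of y]
      by (meson Image_singleton_iff rtrancl_trans)
  qed
  have "Inl 0 \<in> V" using V_Inl by simp
  then have "V // (graph_adj E)\<^sup>* = {V}" unfolding quotient_def using cls by auto
  then show ?thesis unfolding num_components_def by simp
qed

lemma card_nbc: "card (nbc n Pts) = (\<Sum>P\<in>{P\<in>Pts. 0 \<notin> P}. card P - 1)"
proof -
  let ?A = "{P\<in>Pts. 0 \<notin> P}"
  have eq: "nbc n Pts = (\<lambda>(P,k). (Min P, k)) ` (SIGMA P:?A. P - {Min P})"
  proof (intro equalityI subsetI)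
    fix x assume x: "x \<in> nbc n Pts"
    obtain j k where xjk: "x = (j,k)" by (cases x)
    note d = nbcD[OF x[unfolded xjk]]
    have "(pt j k, k) \<in> (SIGMA P:?A. P - {Min P})" using d by auto
    moreover have "x = (Min (pt j k), k)" using d xjk by simp
    ultimately show "x \<in> (\<lambda>(P,k). (Min P, k)) ` (SIGMA P:?A. P - {Min P})" by force
  next
    fix x assume "x \<in> (\<lambda>(P,k). (Min P, k)) ` (SIGMA P:?A. P - {Min P})"
    then obtain P k where x: "x = (Min P, k)" and P: "P \<in> Pts" "0 \<notin> P" "k \<in> P" "k \<noteq> Min P"
      by auto
    have fP: "finite P" using Pts_fin P by auto
    have mP: "Min P \<in> P" using Min_in[OF fP Pts_ne[OF P(1)]] .
    have "Min P \<le> k" using Min_le[OF fP P(3)] .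
    then have lt: "Min P < k" using P by simp
    have "Min P \<noteq> 0"
    proof
      assume "Min P = 0" then show False using mP P by simp
    qed
    then show "x \<in> nbc n Pts" unfolding nbc_def x using lt P mP in_Pts_le by auto
  qed
  have inj: "inj_on (\<lambda>(P,k). (Min P, k)) (SIGMA P:?A. P - {Min P})"
  proof (rule inj_onI)
    fix a b assume a: "a \<in> (SIGMA P:?A. P - {Min P})" and b: "b \<in> (SIGMA P:?A. P - {Min P})"
      and e: "(\<lambda>(P,k). (Min P, k)) a = (\<lambda>(P,k). (Min P, k)) b"
    obtain P k where ak: "a = (P,k)" by (cases a)
    obtain P' k' where bk: "b = (P',k')" by (cases b)
    have P: "P \<in> Pts" "k \<in> P" "k \<noteq> Min P" using a ak by auto
    have P': "P' \<in> Pts" "k' \<in> P'" "k' \<noteq> Min P'" using b bk by auto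
    have eq2: "Min P = Min P'" "k = k'" using e ak bk by auto
    have m: "Min P \<in> P" using Min_in[OF Pts_fin[OF P(1)] Pts_ne[OF P(1)]] .
    have m': "Min P' \<in> P'" using Min_in[OF Pts_fin[OF P'(1)] Pts_ne[OF P'(1)]] .
    have "P = P'" using same_pt[OF P(1) P'(1) m P(2)] m' P'(2) eq2 P(3) by auto
    then show "a = b" using ak bk eq2 by simp
  qed
  have "card (nbc n Pts) = card (SIGMA P:?A. P - {Min P})" unfolding eq using card_image[OF inj] .
  also have "\<dots> = (\<Sum>P\<in>?A. card (P - {Min P}))"
    using card_SigmaI[of ?A "\<lambda>P. P - {Min P}"] fin_Pts Pts_fin by simp
  also have "\<dots> = (\<Sum>P\<in>?A. card P - 1)"
  proof (rule sum.cong)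
    fix P assume "P \<in> ?A"
    then have "P \<in> Pts" by simp
    then show "card (P - {Min P}) = card P - 1"
      using Min_in[OF Pts_fin Pts_ne] card_Diff_singleton Pts_fin by metis
  qed simp
  finally show ?thesis .
qed

lemma sum0: "(\<Sum>P\<in>{P\<in>Pts. 0 \<in> P}. card P - 1) = n"
proof -
  let ?A = "{P\<in>Pts. 0 \<in> P}"
  have un: "(\<Union>P\<in>?A. P - {0}) = {1..n}"
  proof (intro equalityI subsetI)
    fix i assume "i \<in> (\<Union>P\<in>?A. P - {0})"
    then obtain P where "P \<in> Pts" "i \<in> P" "i \<noteq> 0" by auto
    then show "i \<in> {1..n}" using in_Pts_le by fastforce
  next
    fix i assume i: "i \<in> {1..n}"
    then have "pt 0 i \<in> ?A" "i \<in> pt 0 i - {0}" using pt[of 0 i] by auto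
    then show "i \<in> (\<Union>P\<in>?A. P - {0})" by blast
  qed
  have "card (\<Union>P\<in>?A. P - {0}) = (\<Sum>P\<in>?A. card (P - {0}))"
  proof (rule card_UN_disjoint)
    show "finite ?A" using fin_Pts by simp
    show "\<forall>P\<in>?A. finite (P - {0})" using Pts_fin by simp
    show "\<forall>P\<in>?A. \<forall>Q\<in>?A. P \<noteq> Q \<longrightarrow> (P - {0}) \<inter> (Q - {0}) = {}"
    proof (intro ballI impI)
      fix P Q assume P: "P \<in> ?A" and Q: "Q \<in> ?A" and ne: "P \<noteq> Q"
      show "(P - {0}) \<inter> (Q - {0}) = {}"
      proof (rule ccontr)
        assume "(P - {0}) \<inter> (Q - {0}) \<noteq> {}"
        then obtain i where "i \<in> P" "i \<in> Q" "i \<noteq> 0" by blast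
        then have "P = Q" using same_pt[of P Q 0 i] P Q by auto
        then show False using ne by simp
      qed
    qed
  qed
  then have "n = (\<Sum>P\<in>?A. card (P - {0}))" using un by simp
  also have "\<dots> = (\<Sum>P\<in>?A. card P - 1)"
    by (rule sum.cong) (use Pts_fin in auto)
  finally show ?thesis by simp
qed

lemma betti: "betti1 V E = int (card (nbc n Pts))"
proof -
  let ?h = "\<lambda>P. card P - 1"
  have s1: "(\<Sum>P\<in>Pts. card P) = (\<Sum>P\<in>Pts. ?h P) + card Pts"
  proof -
    have "(\<Sum>P\<in>Pts. card P) = (\<Sum>P\<in>Pts. ?h P + 1)"
      by (rule sum.cong) (use Pts_card in force)+
    then show ?thesis by (simp only: sum.distrib card_eq_sum)
  qed
  have s2: "(\<Sum>P\<in>Pts. ?h P) = (\<Sum>P\<in>Pts \<inter> {P. 0 \<in> P}. ?h P) + (\<Sum>P\<in>Pts - {P. 0 \<in> P}. ?h P)"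
    using sum.Int_Diff[OF fin_Pts] by blast
  have e1: "Pts \<inter> {P. 0 \<in> P} = {P\<in>Pts. 0 \<in> P}" by auto
  have e2: "Pts - {P. 0 \<in> P} = {P\<in>Pts. 0 \<notin> P}" by auto
  have "card E = n + card (nbc n Pts) + card Pts"
    using card_E s1 s2 sum0 card_nbc e1 e2 by simp
  then show ?thesis unfolding betti1_def using card_V ncomp by simp
qed

end
theorem mainTheorem2:
  fixes n :: nat and Pts :: "nat set set"
  assumes "comb_line_arr n Pts"
  shows "(\<exists>f. bij_betw f (nbc n Pts) (f ` nbc n Pts) \<and>
            is_cycle_basis (inc_vertices n Pts) (inc_edges n Pts) (f ` nbc n Pts))
         \<and> betti1 (inc_vertices n Pts) (inc_edges n Pts) = int (card (nbc n Pts))"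
proof -
  interpret cla n Pts by (rule cla.intro) (rule assms)
  have "bij_betw (\<lambda>(j,k). cyc j k) (nbc n Pts) ((\<lambda>(j,k). cyc j k) ` nbc n Pts)"
    using inj_cyc by (simp add: bij_betw_def)
  then show ?thesis using basis betti by blast
qed

end
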